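(* Let $R,C>0$, $\kappa\ge1>\overline\lambda>\underline\lambda>0$ and $\alpha\in(0,1)$. Then there exist $\xi_0>0$ and $\overline\kappa>1$ such that every infinite sequence $\{h_j\}_{j=1}^\infty$ satisfying, for all $j$: (H0) $h_j:B_R\to h_j(B_R)$ is a $\mathcal{C}^{1+\alpha}$ diffeomorphism with $h_j(0)=0$; (H1) $\|h_j\|_{\mathcal{C}^{1+\alpha}}<C$; (H2) $\underline\lambda<m(D_yh_j)\le\|D_yh_j\|<\overline\lambda$ for all $y\in B_R$; (H3) $D_0h^j$ is $\kappa$-conformal — is $\overline\kappa$-conformal at every point of $B_{\xi_0}$, i.e. $D_xh^n$ is $\overline\kappa$-conformal for all $x\in B_{\xi_0}$ and all $n\in\mathbb{N}$.
   Context: $B_r$ is the open Euclidean ball about $0$ in $\mathbb{R}^d$; $h^n=h_n\circ\cdots\circ h_1$; $m(D)=\inf_{|v|=1}|Dv|$; $D$ is $\kappa$-conformal if $\|D\|\,\|D^{-1}\|\le\kappa$; $\|h\|_{\mathcal{C}^{1+\alpha}}=\|h\|_{\mathcal{C}^1}+\sup\{\|D_xh-D_yh\|/|x-y|^\alpha:0<|x-y|<1\}$. *)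

theory Defs
  imports "HOL-Analysis.Analysis"
begin

definition Dh :: "('a::euclidean_space \<Rightarrow> 'a) \<Rightarrow> 'a \<Rightarrow> 'a \<Rightarrow>\<^sub>L 'a" where
  "Dh f x = Blinfun (frechet_derivative f (at x))"

definition mconorm :: "('a::euclidean_space \<Rightarrow>\<^sub>L 'a) \<Rightarrow> real" where
  "mconorm L = Inf {norm (blinfun_apply L v) | v. norm v = 1}"

definition conformal :: "real \<Rightarrow> ('a::euclidean_space \<Rightarrow>\<^sub>L 'a) \<Rightarrow> bool" where
  "conformal \<kappa> L \<longleftrightarrow> (\<exists>Li. L o\<^sub>L Li = id_blinfun \<and> Li o\<^sub>L L = id_blinfun \<and> norm L * norm Li \<le> \<kappa>)"

text \<open>h^n = h_n o ... o h_1 (sequence indexed from 1; h^0 = id).\<close>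
fun hcomp :: "(nat \<Rightarrow> 'a \<Rightarrow> 'a) \<Rightarrow> nat \<Rightarrow> 'a \<Rightarrow> 'a" where
  "hcomp h 0 = id"
| "hcomp h (Suc n) = h (Suc n) \<circ> hcomp h n"

text \<open>C^{1+alpha} norm on B_R: sup|h| + sup||Dh|| + alpha-Hoelder seminorm of Dh
  (over pairs at distance in (0,1)); extended-real valued so unboundedness gives infinity.\<close>
definition C1a_norm :: "real \<Rightarrow> real \<Rightarrow> ('a::euclidean_space \<Rightarrow> 'a) \<Rightarrow> ereal" where
  "C1a_norm R \<alpha> f =
     (SUP x\<in>ball 0 R. ereal (norm (f x)))
   + (SUP x\<in>ball 0 R. ereal (norm (Dh f x)))
   + (SUP p\<in>{(x,y). x \<in> ball 0 R \<and> y \<in> ball 0 R \<and> 0 < dist x y \<and> dist x y < 1}.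
        ereal (norm (Dh f (fst p) - Dh f (snd p)) / (dist (fst p) (snd p)) powr \<alpha>))"

definition C1a_on :: "real \<Rightarrow> 'a set \<Rightarrow> ('a::euclidean_space \<Rightarrow> 'a) \<Rightarrow> bool" where
  "C1a_on \<alpha> U f \<longleftrightarrow>
     (\<forall>x\<in>U. f differentiable (at x)) \<and> continuous_on U (Dh f) \<and>
     (\<exists>K. \<forall>x\<in>U. \<forall>y\<in>U. 0 < dist x y \<and> dist x y < 1 \<longrightarrow>
           norm (Dh f x - Dh f y) \<le> K * dist x y powr \<alpha>)"

definition C1a_diffeo :: "real \<Rightarrow> real \<Rightarrow> ('a::euclidean_space \<Rightarrow> 'a) \<Rightarrow> bool" where
  "C1a_diffeo R \<alpha> f \<longleftrightarrow>
     C1a_on \<alpha> (ball 0 R) f \<and> inj_on f (ball 0 R) \<and> open (f ` ball 0 R) \<and>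
     (\<exists>g. (\<forall>x\<in>ball 0 R. g (f x) = x) \<and> C1a_on \<alpha> (f ` ball 0 R) g)"

end

theory Submission
  imports Defs
begin


lemma Dh_apply: "f differentiable at x \<Longrightarrow> blinfun_apply (Dh f x) = frechet_derivative f (at x)"
  unfolding Dh_def
  by (rule bounded_linear_Blinfun_apply) (meson frechet_derivative_works has_derivative_bounded_linear)

lemma Dh_compose:
  assumes "g differentiable at x" "f differentiable at (g x)"
  shows "Dh (f \<circ> g) x = Dh f (g x) o\<^sub>L Dh g x"
proof -
  have "(f \<circ> g) differentiable at x" using assms differentiable_chain_at by blast
  then show ?thesis
    by (intro blinfun_eqI) (simp add: Dh_apply assms frechet_derivative_compose)
qed

lemma Dh_id: "Dh id x = id_blinfun"
proof -
  have "id differentiable at x" unfolding id_def by simp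
  then show ?thesis by (intro blinfun_eqI) (simp add: Dh_apply)
qed

lemma mconorm_le: "mconorm L * norm v \<le> norm (blinfun_apply L v)"
proof (cases "v = 0")
  case True then show ?thesis by simp
next
  case False
  let ?u = "v /\<^sub>R norm v"
  have "mconorm L \<le> norm (blinfun_apply L ?u)"
    unfolding mconorm_def
    by (rule cInf_lower) (use False in \<open>auto intro!: bdd_belowI[where m=0]\<close>)
  also have "\<dots> = norm (blinfun_apply L v) / norm v"
    using False by (simp add: blinfun.scaleR_right divide_inverse_commute)
  finally show ?thesis using False by (simp add: field_simps)
qed


lemma conformal_of_bounds:
  fixes P :: "'a::euclidean_space \<Rightarrow>\<^sub>L 'a"
  assumes lb: "\<And>v. c * norm v \<le> norm (blinfun_apply P v)" and c: "c > 0" and ub: "norm P \<le> K * c"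
  shows "conformal K P"
proof -
  have lin: "linear (blinfun_apply P)" by (simp add: blinfun.bounded_linear_right bounded_linear.linear)
  have inj: "inj (blinfun_apply P)"
  proof (rule linear_injective_0[OF lin, THEN iffD2], intro allI impI)
    fix v assume "blinfun_apply P v = 0"
    with lb[of v] c show "v = 0" by (simp add: mult_le_0_iff)
  qed
  obtain g where g: "linear g" "g \<circ> blinfun_apply P = id"
    using linear_injective_left_inverse[OF lin inj] by blast
  have surj: "surj (blinfun_apply P)" using linear_injective_imp_surjective[OF lin inj] by simp
  have gP: "g (blinfun_apply P v) = v" for v using g(2) by (metis comp_apply id_apply)
  have Pg: "blinfun_apply P (g y) = y" for y
    using surj gP by (metis surjD)
  have bl: "bounded_linear g" using g(1) linear_conv_bounded_linear by blast
  define Li where "Li = Blinfun g"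
  have Li: "blinfun_apply Li = g" unfolding Li_def using bl bounded_linear_Blinfun_apply by blast
  have nLi: "norm Li \<le> 1 / c"
  proof (rule norm_blinfun_bound)
    show "0 \<le> 1 / c" using c by simp
    fix y
    have "c * norm (g y) \<le> norm y" using lb[of "g y"] Pg by simp
    then show "norm (blinfun_apply Li y) \<le> 1 / c * norm y" using c by (simp add: Li field_simps)
  qed
  have "norm P * norm Li \<le> (K * c) * (1 / c)"
    by (rule mult_mono[OF ub nLi]) (use c order_trans[OF norm_ge_zero ub] in auto)
  also have "\<dots> = K" using c by simp
  finally have "norm P * norm Li \<le> K" .
  moreover have "P o\<^sub>L Li = id_blinfun" by (intro blinfun_eqI) (simp add: Li Pg)
  moreover have "Li o\<^sub>L P = id_blinfun" by (intro blinfun_eqI) (simp add: Li gP)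
  ultimately show ?thesis unfolding conformal_def by blast
qed


lemma core:
  fixes A B Q Qi P :: "nat \<Rightarrow> 'a::euclidean_space \<Rightarrow>\<^sub>L 'a"
  assumes QS: "\<And>k. Q (Suc k) = A (Suc k) o\<^sub>L Q k"
    and P0: "P 0 = id_blinfun" and PS: "\<And>k. P (Suc k) = B (Suc k) o\<^sub>L P k"
    and Qi1: "\<And>k. Q k o\<^sub>L Qi k = id_blinfun" and Qi2: "\<And>k. Qi k o\<^sub>L Q k = id_blinfun"
    and Qi0: "Qi 0 = id_blinfun"
    and Qk: "\<And>k. norm (Q k) * norm (Qi k) \<le> \<kappa>"
    and lam: "lam > 0" and mA: "\<And>k v. lam * norm v \<le> norm (blinfun_apply (A (Suc k)) v)"
    and dB: "\<And>k. norm (B (Suc k) - A (Suc k)) \<le> c * r^k"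
    and c: "c \<ge> 0" and r: "0 \<le> r" "r < 1" and small: "\<kappa> * c / (lam * (1 - r)) \<le> 1/4"
  shows "conformal (4*\<kappa>) (P n)"
proof -
  have kap: "\<kappa> \<ge> 0" using Qk[of 0] by (meson norm_ge_zero order_trans zero_le_mult_iff)
  have nQ: "norm (Q k) \<le> norm (Q (Suc k)) / lam" for k
  proof (rule norm_blinfun_bound)
    show "0 \<le> norm (Q (Suc k)) / lam" using lam by simp
    fix v
    have "lam * norm (blinfun_apply (Q k) v) \<le> norm (blinfun_apply (Q (Suc k)) v)"
      using mA[where k=k and v="blinfun_apply (Q k) v"] by (simp add: QS)
    also have "\<dots> \<le> norm (Q (Suc k)) * norm v" by (rule norm_blinfun)
    finally show "norm (blinfun_apply (Q k) v) \<le> norm (Q (Suc k)) / lam * norm v"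
      using lam by (simp add: field_simps)
  qed
  define D where "D = \<kappa> * c / lam"
  have D0: "D \<ge> 0" unfolding D_def using kap c lam by simp
  define G where "G k = Qi (Suc k) o\<^sub>L (B (Suc k) - A (Suc k)) o\<^sub>L Q k" for k
  have nG: "norm (G k) \<le> D * r^k" for k
  proof -
    have "norm (G k) \<le> norm (Qi (Suc k)) * norm (B (Suc k) - A (Suc k)) * norm (Q k)"
      unfolding G_def by (meson norm_blinfun_compose mult_right_mono norm_ge_zero order_trans)
    also have "\<dots> \<le> norm (Qi (Suc k)) * (c * r^k) * (norm (Q (Suc k)) / lam)"
      by (intro mult_mono mult_left_mono dB nQ) (use c r in auto)
    also have "\<dots> = (norm (Q (Suc k)) * norm (Qi (Suc k))) * (c * r^k / lam)" by simp
    also have "\<dots> \<le> \<kappa> * (c * r^k / lam)"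
      by (rule mult_right_mono[OF Qk]) (use c r lam in auto)
    finally show ?thesis unfolding D_def by simp
  qed
  define S where "S k = (\<Sum>j<k. r^j)" for k
  have DS: "D * S k \<le> 1/4" for k
  proof -
    have "S k = (1 - r^k) / (1 - r)" unfolding S_def using r by (simp add: sum_gp_strict)
    also have "\<dots> \<le> 1 / (1 - r)" using r by (intro divide_right_mono) auto
    finally have "D * S k \<le> D * (1 / (1 - r))" using D0 by (rule mult_left_mono)
    also have "\<dots> \<le> 1/4" using small unfolding D_def by simp
    finally show ?thesis .
  qed
  have key: "norm (blinfun_apply (Qi n) (blinfun_apply (P n) u)) - norm u \<le> norm u / 2
       \<and> norm u - norm (blinfun_apply (Qi n) (blinfun_apply (P n) u)) \<le> norm u / 2" for u
  proof -
    define w where "w k = blinfun_apply (Qi k) (blinfun_apply (P k) u)" for k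
    have rec: "w (Suc k) = w k + blinfun_apply (G k) (w k)" for k
    proof -
      have "blinfun_apply (P k) u = blinfun_apply (Q k) (w k)"
        unfolding w_def using Qi1[of k] by (metis blinfun_apply_blinfun_compose blinfun_apply_id_blinfun)
      then have "w (Suc k) = blinfun_apply (Qi (Suc k)) (blinfun_apply (B (Suc k)) (blinfun_apply (Q k) (w k)))"
        unfolding w_def by (simp add: PS)
      also have "\<dots> = blinfun_apply (Qi (Suc k)) (blinfun_apply (A (Suc k)) (blinfun_apply (Q k) (w k)))
          + blinfun_apply (G k) (w k)"
        unfolding G_def by (simp add: blinfun.diff_left blinfun.diff_right)
      also have "blinfun_apply (Qi (Suc k)) (blinfun_apply (A (Suc k)) (blinfun_apply (Q k) (w k))) = w k"
        using Qi2[of "Suc k"] by (metis QS blinfun_apply_blinfun_compose blinfun_apply_id_blinfun)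
      finally show ?thesis .
    qed
    have ind: "norm (w k - u) \<le> 2 * norm u * D * S k" for k
    proof (induction k)
      case 0
      show ?case by (simp add: w_def P0 Qi0 S_def)
    next
      case (Suc k)
      have wk: "norm (w k) \<le> 2 * norm u"
      proof -
        have "norm (w k) \<le> norm u + norm (w k - u)" by (metis add.commute diff_add_cancel norm_triangle_ineq)
        also have "\<dots> \<le> norm u + 2 * norm u * (D * S k)" using Suc.IH by (simp add: mult.assoc)
        also have "\<dots> \<le> norm u + 2 * norm u * (1/4)" using DS[of k] by (intro add_left_mono mult_left_mono) auto
        finally show ?thesis using norm_ge_zero[of u] by linarith
      qed
      have "norm (w (Suc k) - u) = norm ((w k - u) + blinfun_apply (G k) (w k))" by (simp add: rec algebra_simps)
      also have "\<dots> \<le> norm (w k - u) + norm (G k) * norm (w k)"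
        by (meson add_left_mono norm_blinfun norm_triangle_ineq order_trans)
      also have "\<dots> \<le> 2 * norm u * D * S k + (D * r^k) * (2 * norm u)"
        by (intro add_mono Suc.IH mult_mono nG wk) (use D0 r in auto)
      also have "\<dots> = 2 * norm u * D * S (Suc k)" by (simp add: S_def algebra_simps)
      finally show ?case .
    qed
    have "norm (w n - u) \<le> 2 * norm u * (D * S n)" using ind[of n] by (simp add: mult.assoc)
    also have "\<dots> \<le> 2 * norm u * (1/4)" using DS[of n] by (intro mult_left_mono) auto
    finally have "norm (w n - u) \<le> norm u / 2" by simp
    moreover have "norm (w n) - norm u \<le> norm (w n - u)" by (rule norm_triangle_ineq2)
    moreover have "norm u - norm (w n) \<le> norm (w n - u)" by (metis norm_minus_commute norm_triangle_ineq2)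
    ultimately show ?thesis unfolding w_def by linarith
  qed
  have Pn: "norm (P n) \<le> 2 * norm (Q n)"
  proof (rule norm_blinfun_bound)
    show "0 \<le> 2 * norm (Q n)" by simp
    fix u
    have "blinfun_apply (P n) u = blinfun_apply (Q n) (blinfun_apply (Qi n) (blinfun_apply (P n) u))"
      using Qi1[of n] by (metis blinfun_apply_blinfun_compose blinfun_apply_id_blinfun)
    then have "norm (blinfun_apply (P n) u) \<le> norm (Q n) * norm (blinfun_apply (Qi n) (blinfun_apply (P n) u))"
      by (metis norm_blinfun)
    also have "\<dots> \<le> norm (Q n) * (2 * norm u)" using key[of u] by (intro mult_left_mono) auto
    finally show "norm (blinfun_apply (P n) u) \<le> 2 * norm (Q n) * norm u" by simp
  qed
  have Qin: "norm (Qi n) > 0"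
  proof (rule ccontr)
    assume "\<not> norm (Qi n) > 0"
    then have "Qi n = 0" by simp
    then have "(id_blinfun :: 'a \<Rightarrow>\<^sub>L 'a) = 0" using Qi1[of n] by simp
    then have "blinfun_apply (id_blinfun :: 'a \<Rightarrow>\<^sub>L 'a) (SOME b. b \<in> Basis) = 0" by simp
    moreover have "(SOME b. b \<in> (Basis::'a set)) \<noteq> 0"
      by (metis nonempty_Basis some_in_eq zero_not_in_Basis)
    ultimately show False by simp
  qed
  show ?thesis
  proof (rule conformal_of_bounds[where c = "1 / (2 * norm (Qi n))"])
    show "0 < 1 / (2 * norm (Qi n))" using Qin by simp
    fix v
    have "norm v / 2 \<le> norm (blinfun_apply (Qi n) (blinfun_apply (P n) v))" using key[of v] by linarith
    also have "\<dots> \<le> norm (Qi n) * norm (blinfun_apply (P n) v)" by (rule norm_blinfun)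
    finally show "1 / (2 * norm (Qi n)) * norm v \<le> norm (blinfun_apply (P n) v)"
      using Qin by (simp add: field_simps)
  next
    have "norm (P n) \<le> 2 * norm (Q n)" by (rule Pn)
    also have "\<dots> = 2 * (norm (Q n) * norm (Qi n)) / norm (Qi n)" using Qin by simp
    also have "\<dots> \<le> 2 * \<kappa> / norm (Qi n)" using Qk[of n] Qin by (intro divide_right_mono) auto
    also have "\<dots> = 4 * \<kappa> * (1 / (2 * norm (Qi n)))" by simp
    finally show "norm (P n) \<le> 4 * \<kappa> * (1 / (2 * norm (Qi n)))" .
  qed
qed


lemma pow_powr: "(x ^ k) powr a = (x powr a) ^ k" for x :: real
  by (induction k) (auto simp: powr_mult)

lemma contract:
  fixes f :: "'a::euclidean_space \<Rightarrow> 'a"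
  assumes d: "\<And>y. y \<in> ball 0 R \<Longrightarrow> f differentiable at y"
    and nD: "\<And>y. y \<in> ball 0 R \<Longrightarrow> norm (Dh f y) < L" and f0: "f 0 = 0"
    and z: "z \<in> ball 0 R"
  shows "norm (f z) \<le> L * norm z"
proof -
  have R: "0 \<in> ball 0 R" using z by (auto intro: le_less_trans[OF norm_ge_zero])
  have "norm (f z - f 0) \<le> L * norm (z - 0)"
  proof (rule differentiable_bound[where f' = "\<lambda>y. frechet_derivative f (at y)"])
    show "convex (ball (0::'a) R)" by simp
    fix y :: 'a assume y: "y \<in> ball 0 R"
    show "(f has_derivative frechet_derivative f (at y)) (at y within ball 0 R)"
      using d[OF y] frechet_derivative_works has_derivative_at_withinI by blast
    have "onorm (frechet_derivative f (at y)) = norm (Dh f y)"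
      by (simp add: norm_blinfun.rep_eq Dh_apply d[OF y])
    then show "onorm (frechet_derivative f (at y)) \<le> L" using nD[OF y] by simp
  qed (use z R in auto)
  then show ?thesis using f0 by simp
qed

lemma holder_from_norm:
  fixes f :: "'a::euclidean_space \<Rightarrow> 'a"
  assumes N: "C1a_norm R \<alpha> f < ereal C" and x: "x \<in> ball 0 R" and y: "y \<in> ball 0 R"
    and d: "0 < dist x y" "dist x y < 1"
  shows "norm (Dh f x - Dh f y) / (dist x y) powr \<alpha> \<le> C"
proof -
  define a where "a = (SUP x\<in>ball 0 R. ereal (norm (f x)))"
  define b where "b = (SUP x\<in>ball 0 R. ereal (norm (Dh f x)))"
  define c where "c = (SUP p\<in>{(x,y). x \<in> ball 0 R \<and> y \<in> ball 0 R \<and> 0 < dist x y \<and> dist x y < 1}.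
        ereal (norm (Dh f (fst p) - Dh f (snd p)) / (dist (fst p) (snd p)) powr \<alpha>))"
  have a: "0 \<le> a" unfolding a_def by (rule SUP_upper2[OF x]) simp
  have b: "0 \<le> b" unfolding b_def by (rule SUP_upper2[OF x]) simp
  have t: "ereal (norm (Dh f x - Dh f y) / (dist x y) powr \<alpha>) \<le> c"
    unfolding c_def by (rule SUP_upper2[where i="(x,y)"]) (use x y d in auto)
  have "c \<le> a + b + c" using a b by (simp add: add_increasing)
  also have "\<dots> < ereal C" using N unfolding C1a_norm_def a_def b_def c_def .
  finally have "ereal (norm (Dh f x - Dh f y) / (dist x y) powr \<alpha>) < ereal C" using t by (rule le_less_trans[rotated])
  then show ?thesis by simp
qed


lemma orbit:
  fixes h :: "nat \<Rightarrow> 'a::euclidean_space \<Rightarrow> 'a"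
  assumes d: "\<And>j y. j \<ge> 1 \<Longrightarrow> y \<in> ball 0 R \<Longrightarrow> h j differentiable at y"
    and nD: "\<And>j y. j \<ge> 1 \<Longrightarrow> y \<in> ball 0 R \<Longrightarrow> norm (Dh (h j) y) < L"
    and h0: "\<And>j. j \<ge> 1 \<Longrightarrow> h j 0 = 0"
    and L: "0 \<le> L" "L \<le> 1" and z: "z \<in> ball 0 R"
  shows "norm (hcomp h k z) \<le> L^k * norm z \<and> hcomp h k z \<in> ball 0 R \<and> hcomp h k differentiable at z"
proof (induction k)
  case 0
  have "id differentiable at z" unfolding id_def by simp
  then show ?case using z by simp
next
  case (Suc k)
  then have IH: "norm (hcomp h k z) \<le> L^k * norm z" "hcomp h k z \<in> ball 0 R" "hcomp h k differentiable at z"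
    by auto
  have "norm (h (Suc k) (hcomp h k z)) \<le> L * norm (hcomp h k z)"
    by (rule contract[where R=R]) (use d nD h0 IH(2) in auto)
  also have "\<dots> \<le> L * (L^k * norm z)" using IH(1) L by (simp add: mult_left_mono)
  finally have n: "norm (hcomp h (Suc k) z) \<le> L^Suc k * norm z" by simp
  have "L^Suc k * norm z \<le> norm z" using L by (intro mult_left_le_one_le power_le_one) auto
  with n z have b: "hcomp h (Suc k) z \<in> ball 0 R" by auto
  have "hcomp h (Suc k) differentiable at z"
    using differentiable_chain_at[OF IH(3) d[OF _ IH(2), of "Suc k"]] by simp
  with n b show ?case by (simp add: comp_def)
qed


theorem mainTheorem7:
  fixes R C \<kappa> lam_up lam_lo \<alpha> :: real
  assumes "R > 0" and "C > 0" and "\<kappa> \<ge> 1" and "1 > lam_up" and "lam_up > lam_lo" and "lam_lo > 0"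
    and "0 < \<alpha>" and "\<alpha> < 1"
  shows "\<exists>xi0 > 0. \<exists>kappa_bar > 1. \<forall>h :: nat \<Rightarrow> 'a::euclidean_space \<Rightarrow> 'a.
           (\<forall>j\<ge>1.
              C1a_diffeo R \<alpha> (h j) \<and> h j 0 = 0
            \<and> C1a_norm R \<alpha> (h j) < ereal C
            \<and> (\<forall>y\<in>ball 0 R. lam_lo < mconorm (Dh (h j) y) \<and> mconorm (Dh (h j) y) \<le> norm (Dh (h j) y)
                                \<and> norm (Dh (h j) y) < lam_up)
            \<and> conformal \<kappa> (Dh (hcomp h j) 0))
           \<longrightarrow> (\<forall>n\<ge>1. \<forall>x\<in>ball 0 xi0. conformal kappa_bar (Dh (hcomp h n) x))"
proof -
  note as = assms
  define r where "r = lam_up powr \<alpha>"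
  have r0: "0 \<le> r" unfolding r_def by simp
  have r1: "r < 1" unfolding r_def using powr_less_mono2[of \<alpha> lam_up 1] as by simp
  define eps where "eps = lam_lo * (1 - r) / (4 * \<kappa> * C)"
  have eps: "eps > 0" unfolding eps_def using as r1 by simp
  define xi0 where "xi0 = min (min R (1/2)) (eps powr (1/\<alpha>))"
  have xi0: "xi0 > 0" unfolding xi0_def using as eps by simp
  have xi0e: "xi0 powr \<alpha> \<le> eps"
  proof -
    have "xi0 powr \<alpha> \<le> (eps powr (1/\<alpha>)) powr \<alpha>"
      by (rule powr_mono2) (use as xi0 in \<open>auto simp: xi0_def\<close>)
    also have "\<dots> = eps" using as eps by (simp add: powr_powr)
    finally show ?thesis .
  qed
  show ?thesis
  proof (rule exI[of _ xi0], rule conjI[OF xi0], rule exI[of _ "4*\<kappa>"], rule conjI)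
    show "1 < 4 * \<kappa>" using as by simp
  next
    show "\<forall>h :: nat \<Rightarrow> 'a::euclidean_space \<Rightarrow> 'a.
           (\<forall>j\<ge>1.
              C1a_diffeo R \<alpha> (h j) \<and> h j 0 = 0
            \<and> C1a_norm R \<alpha> (h j) < ereal C
            \<and> (\<forall>y\<in>ball 0 R. lam_lo < mconorm (Dh (h j) y) \<and> mconorm (Dh (h j) y) \<le> norm (Dh (h j) y)
                                \<and> norm (Dh (h j) y) < lam_up)
            \<and> conformal \<kappa> (Dh (hcomp h j) 0))
           \<longrightarrow> (\<forall>n\<ge>1. \<forall>x\<in>ball 0 xi0. conformal (4*\<kappa>) (Dh (hcomp h n) x))"
  proof (intro allI impI ballI)
    fix h :: "nat \<Rightarrow> 'a \<Rightarrow> 'a" and n :: nat and x :: 'a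
    assume H: "\<forall>j\<ge>1. C1a_diffeo R \<alpha> (h j) \<and> h j 0 = 0
            \<and> C1a_norm R \<alpha> (h j) < ereal C
            \<and> (\<forall>y\<in>ball 0 R. lam_lo < mconorm (Dh (h j) y) \<and> mconorm (Dh (h j) y) \<le> norm (Dh (h j) y)
                                \<and> norm (Dh (h j) y) < lam_up)
            \<and> conformal \<kappa> (Dh (hcomp h j) 0)"
      and n: "n \<ge> 1" and x: "x \<in> ball 0 xi0"
    have d: "\<And>j y. j \<ge> 1 \<Longrightarrow> y \<in> ball 0 R \<Longrightarrow> h j differentiable at y"
      using H unfolding C1a_diffeo_def C1a_on_def by blast
    have nD: "\<And>j y. j \<ge> 1 \<Longrightarrow> y \<in> ball 0 R \<Longrightarrow> norm (Dh (h j) y) < lam_up"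
      using H by blast
    have mD: "\<And>j y. j \<ge> 1 \<Longrightarrow> y \<in> ball 0 R \<Longrightarrow> lam_lo < mconorm (Dh (h j) y)"
      using H by blast
    have h0: "\<And>j. j \<ge> 1 \<Longrightarrow> h j 0 = 0" using H by blast
    have Nj: "\<And>j. j \<ge> 1 \<Longrightarrow> C1a_norm R \<alpha> (h j) < ereal C" using H by blast
    have cj: "\<And>j. j \<ge> 1 \<Longrightarrow> conformal \<kappa> (Dh (hcomp h j) 0)" using H by blast
    have L: "0 \<le> lam_up" "lam_up \<le> 1" using as by auto
    have xR: "x \<in> ball 0 R" using x by (auto simp: xi0_def)
    have R0: "(0::'a) \<in> ball 0 R" using as by simp
    have orb: "norm (hcomp h k z) \<le> lam_up^k * norm z \<and> hcomp h k z \<in> ball 0 R \<and> hcomp h k differentiable at z"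
      if "z \<in> ball 0 R" for z k
      by (rule orbit[where h=h and R=R and L=lam_up]) (use d nD h0 L that in auto)
    have ox: "norm (hcomp h k x) \<le> lam_up^k * norm x" "hcomp h k x \<in> ball 0 R"
         "hcomp h k differentiable at x" for k
      using orb[OF xR, of k] by auto
    have o0: "hcomp h k 0 = 0" "hcomp h k differentiable at 0" for k
      using orb[OF R0, of k] by auto
    define A where "A k = Dh (h k) 0" for k
    define B where "B k = Dh (h k) (hcomp h (k - 1) x)" for k
    define Q where "Q k = Dh (hcomp h k) 0" for k
    define P where "P k = Dh (hcomp h k) x" for k
    define Qi where "Qi k = (if k = 0 then id_blinfun
        else (SOME Li. Q k o\<^sub>L Li = id_blinfun \<and> Li o\<^sub>L Q k = id_blinfun \<and> norm (Q k) * norm Li \<le> \<kappa>))" for k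
    have Q0: "Q 0 = id_blinfun" unfolding Q_def by (simp add: Dh_id)
    have QiP: "Q k o\<^sub>L Qi k = id_blinfun \<and> Qi k o\<^sub>L Q k = id_blinfun \<and> norm (Q k) * norm (Qi k) \<le> \<kappa>" for k
    proof (cases "k = 0")
      case True
      have "norm (id_blinfun :: 'a \<Rightarrow>\<^sub>L 'a) * norm (id_blinfun :: 'a \<Rightarrow>\<^sub>L 'a) \<le> 1"
        using norm_blinfun_id_le by (metis mult_le_one norm_ge_zero)
      moreover have "(id_blinfun :: 'a \<Rightarrow>\<^sub>L 'a) o\<^sub>L id_blinfun = id_blinfun"
        by (intro blinfun_eqI) simp
      ultimately show ?thesis using True as by (simp add: Qi_def Q0)
    next
      case False
      then have "\<exists>Li. Q k o\<^sub>L Li = id_blinfun \<and> Li o\<^sub>L Q k = id_blinfun \<and> norm (Q k) * norm Li \<le> \<kappa>"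
        using cj[of k] unfolding conformal_def Q_def by simp
      then have "Q k o\<^sub>L Qi k = id_blinfun \<and> Qi k o\<^sub>L Q k = id_blinfun \<and> norm (Q k) * norm (Qi k) \<le> \<kappa>"
        unfolding Qi_def using False by (simp only: if_False) (rule someI_ex)
      then show ?thesis .
    qed
    have "conformal (4*\<kappa>) (P n)"
    proof (rule core[where A=A and B=B and Q=Q and Qi=Qi and lam=lam_lo
          and c="C * norm x powr \<alpha>" and r=r])
      fix k
      show "Q (Suc k) = A (Suc k) o\<^sub>L Q k"
        unfolding Q_def A_def using Dh_compose[OF o0(2)[of k] d[of "Suc k" "hcomp h k 0"]] o0(1)[of k] R0
        by simp
      show "P (Suc k) = B (Suc k) o\<^sub>L P k"
        unfolding P_def B_def using Dh_compose[OF ox(3)[of k] d[of "Suc k" "hcomp h k x"]] ox(2)[of k]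
        by simp
      show "Q k o\<^sub>L Qi k = id_blinfun" "Qi k o\<^sub>L Q k = id_blinfun" "norm (Q k) * norm (Qi k) \<le> \<kappa>"
        using QiP[of k] by auto
    next
      show "P 0 = id_blinfun" unfolding P_def by (simp add: Dh_id)
      show "Qi 0 = id_blinfun" unfolding Qi_def by simp
      show "0 < lam_lo" using as by simp
      show "0 \<le> C * norm x powr \<alpha>" using as by simp
      show "0 \<le> r" "r < 1" by (rule r0, rule r1)
    next
      fix k and v :: 'a
      have "lam_lo * norm v \<le> mconorm (A (Suc k)) * norm v"
        using mD[of "Suc k" 0] R0 unfolding A_def by (intro mult_right_mono) auto
      also have "\<dots> \<le> norm (blinfun_apply (A (Suc k)) v)" by (rule mconorm_le)
      finally show "lam_lo * norm v \<le> norm (blinfun_apply (A (Suc k)) v)" .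
    next
      fix k
      define y where "y = hcomp h k x"
      have yb: "norm y \<le> lam_up^k * norm x" "y \<in> ball 0 R" using ox[of k] by (auto simp: y_def)
      have BA: "B (Suc k) - A (Suc k) = Dh (h (Suc k)) y - Dh (h (Suc k)) 0"
        by (simp add: B_def A_def y_def)
      have pw: "norm y powr \<alpha> \<le> r^k * norm x powr \<alpha>"
      proof -
        have "norm y powr \<alpha> \<le> (lam_up^k * norm x) powr \<alpha>"
          by (rule powr_mono2) (use as yb in auto)
        also have "\<dots> = r^k * norm x powr \<alpha>" by (simp add: powr_mult pow_powr r_def)
        finally show ?thesis .
      qed
      show "norm (B (Suc k) - A (Suc k)) \<le> C * norm x powr \<alpha> * r ^ k"
      proof (cases "y = 0")
        case True
        then show ?thesis using BA as r0 by simp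
      next
        case False
        have lx: "norm x < 1/2" using x by (auto simp: xi0_def)
        have "lam_up^k * norm x \<le> norm x" using L by (intro mult_left_le_one_le power_le_one) auto
        with yb lx have y1: "norm y < 1" by linarith
        have hd: "norm (Dh (h (Suc k)) y - Dh (h (Suc k)) 0) / (dist y 0) powr \<alpha> \<le> C"
          by (rule holder_from_norm[OF Nj yb(2) R0]) (use False y1 in auto)
        have ypos: "norm y powr \<alpha> > 0" using False by simp
        have "norm (Dh (h (Suc k)) y - Dh (h (Suc k)) 0) \<le> C * norm y powr \<alpha>"
          using hd ypos by (simp add: divide_le_eq)
        also have "\<dots> \<le> C * (r^k * norm x powr \<alpha>)" using pw as by (intro mult_left_mono) auto
        finally show ?thesis unfolding BA by (simp add: mult_ac)
      qed
    next
      have nx: "norm x powr \<alpha> \<le> eps"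
      proof -
        have "norm x powr \<alpha> \<le> xi0 powr \<alpha>" by (rule powr_mono2) (use as x in auto)
        then show ?thesis using xi0e by simp
      qed
      have "\<kappa> * (C * norm x powr \<alpha>) / (lam_lo * (1 - r)) \<le> \<kappa> * (C * eps) / (lam_lo * (1 - r))"
        using as r1 nx by (intro divide_right_mono mult_left_mono) auto
      also have "\<dots> = 1/4" unfolding eps_def using as r1 by (simp add: field_simps)
      finally show "\<kappa> * (C * norm x powr \<alpha>) / (lam_lo * (1 - r)) \<le> 1/4" .
    qed
    then show "conformal (4 * \<kappa>) (Dh (hcomp h n) x)" unfolding P_def .
  qed
  qed
qed

end
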